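(* Assume that predictions are made at $n_p$ locations $s_{p,1},\dots,s_{p,n_p}$ with covariate data $X_p$. When applying the Vecchia approximation to the joint response vector $(y_p,y)^T$ with the predicted response $y_p$ appearing first in the ordering, the conditional distribution $y_p|y$ is given by \[y_p|y\sim \mathcal{N} \left( \mu_p , \Xi_p\right),\] with \begin{equation*} \begin{split} \mu_p=& F(X_p)- \left(B_p^T{D_p}^{-1}B_p + B_{op}^T{D_o}^{-1}B_{op}\right)^{-1}B_{op}^T{D_o}^{-1}B_o\left(y-F(X)\right)\\ \Xi_p=& \left(B_p^T{D_p}^{-1}B_p + B_{op}^T{D_o}^{-1}B_{op}\right)^{-1}, \end{split} \end{equation*} where $B_{o},D_o\in\mathbb{R}^{n\times n}$, $B_{op}\in\mathbb{R}^{n\times n_p}$, $B_p,D_p\in\mathbb{R}^{n_p\times n_p}$ are the following submatrices of the Vecchia approximated precision matrix $\tilde{Cov}\left((y_p,y)^T\right)^{-1}$: $$ \tilde{Cov}\left((y_p,y)^T\right)^{-1}= \begin{pmatrix} B_p & 0 \\ B_{op}&B_o\end{pmatrix}^T \begin{pmatrix} {D_p}^{-1} & 0 \\0&{D_o}^{-1}\end{pmatrix} \begin{pmatrix} B_p & 0 \\ B_{op}&B_o\end{pmatrix}. $$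
   Context: Model: $y=F(X)+Zb+\epsilon$, $b\sim\mathcal{N}(0,\Sigma)$, $\epsilon\sim\mathcal{N}(0,\sigma^2 I_n)$, with $y\in\mathbb{R}^n$, where $b$ contains a Gaussian process with covariance function $c(\cdot,\cdot)$. Vecchia approximation of a response vector with given ordering: $p(y|F,\theta)\approx\prod_{i} p(y_i|y_{N(i)},F,\theta)$, where $N(i)$ are the indices of the nearest neighbors of location $i$ among earlier locations in the ordering; $p(y_i|y_{N(i)},F,\theta)=\mathcal{N}(y_i\mid F_i+A_i(y_{N(i)}-F_{N(i)}),D_i)$ with $A_i=(Z\Sigma Z^T)_{i,N(i)}((Z\Sigma Z^T+\sigma^2I)_{N(i)})^{-1}$ and $D_i=(Z\Sigma Z^T+\sigma^2I)_{i,i}-A_i(Z\Sigma Z^T)_{N(i),i}$. The Cholesky-type factor is the lower triangular matrix with $1$'s on the diagonal and entries $-A_i$ in positions $(i,N(i))$, and the diagonal matrix has entries $D_i$; the approximate precision is (factor)$^T$(diagonal)$^{-1}$(factor). Here this construction is applied to the joint vector $(y_p,y)$ of the prediction variable $y_p\in\mathbb{R}^{n_p}$ (following the same model at the prediction locations) and the observed response $y$, and the resulting factors are partitioned into blocks as in the claim. *)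

theory Defs
  imports "HOL-Probability.Probability" "Jordan_Normal_Form.Determinant"
    "Jordan_Normal_Form.Gauss_Jordan_Elimination"
begin

definition minv :: "real mat \<Rightarrow> real mat" where
  "minv A = (case mat_inverse A of Some B \<Rightarrow> B | None \<Rightarrow> 0\<^sub>m (dim_row A) (dim_col A))"

definition sym_psd :: "nat \<Rightarrow> real mat \<Rightarrow> bool" where
  "sym_psd d S \<longleftrightarrow> S \<in> carrier_mat d d \<and> S\<^sup>T = S \<and>
     (\<forall>v \<in> carrier_vec d. v \<bullet> (S *\<^sub>v v) \<ge> 0)"

text \<open>K is the covariance Z Sigma Z^T of the latent part (size d x d), s2 is the
 noise variance sigma^2, Nb i is the neighbour set N(i) (a subset of the earlier indices).\<close>

definition nbl :: "(nat \<Rightarrow> nat set) \<Rightarrow> nat \<Rightarrow> nat list" where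
  "nbl Nb i = sorted_list_of_set (Nb i)"

definition sub_mat :: "real mat \<Rightarrow> nat list \<Rightarrow> nat list \<Rightarrow> real mat" where
  "sub_mat M rs cs = mat (length rs) (length cs) (\<lambda>(a,b). M $$ (rs ! a, cs ! b))"

definition sub_vec :: "real vec \<Rightarrow> nat list \<Rightarrow> real vec" where
  "sub_vec v rs = vec (length rs) (\<lambda>a. v $ (rs ! a))"

text \<open>A_i as a (column) vector indexed by the neighbours of i:
  A_i = (K)_{i,N(i)} ((K + s2 I)_{N(i)})^{-1}\<close>
definition vecchia_A :: "nat \<Rightarrow> real mat \<Rightarrow> real \<Rightarrow> (nat \<Rightarrow> nat set) \<Rightarrow> nat \<Rightarrow> real vec" where
  "vecchia_A d K s2 Nb i =
     (let ns = nbl Nb i;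
          Kn = sub_mat (K + s2 \<cdot>\<^sub>m 1\<^sub>m d) ns ns;
          k = vec (length ns) (\<lambda>a. K $$ (i, ns ! a))
      in (minv Kn)\<^sup>T *\<^sub>v k)"

definition vecchia_D :: "nat \<Rightarrow> real mat \<Rightarrow> real \<Rightarrow> (nat \<Rightarrow> nat set) \<Rightarrow> nat \<Rightarrow> real" where
  "vecchia_D d K s2 Nb i =
     (let ns = nbl Nb i
      in K $$ (i,i) + s2 - vecchia_A d K s2 Nb i \<bullet> vec (length ns) (\<lambda>a. K $$ (ns ! a, i)))"

definition vecchia_B :: "nat \<Rightarrow> real mat \<Rightarrow> real \<Rightarrow> (nat \<Rightarrow> nat set) \<Rightarrow> real mat" where
  "vecchia_B d K s2 Nb = mat d d (\<lambda>(i,j).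
     if i = j then 1
     else if j \<in> Nb i then - (vecchia_A d K s2 Nb i $ (LEAST a. nbl Nb i ! a = j))
     else 0)"

definition vecchia_Dmat :: "nat \<Rightarrow> real mat \<Rightarrow> real \<Rightarrow> (nat \<Rightarrow> nat set) \<Rightarrow> real mat" where
  "vecchia_Dmat d K s2 Nb = mat d d (\<lambda>(i,j). if i = j then vecchia_D d K s2 Nb i else 0)"

text \<open>Vecchia-approximated density of a response vector x (mean vector F):
  prod_i N(x_i | F_i + A_i (x_{N(i)} - F_{N(i)}), D_i).  normal_density takes the
  standard deviation.\<close>
definition vecchia_density ::
  "nat \<Rightarrow> real mat \<Rightarrow> real \<Rightarrow> (nat \<Rightarrow> nat set) \<Rightarrow> real vec \<Rightarrow> real vec \<Rightarrow> real" where
  "vecchia_density d K s2 Nb F x =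
     (\<Prod>i<d. normal_density
        (F $ i + vecchia_A d K s2 Nb i \<bullet> (sub_vec x (nbl Nb i) - sub_vec F (nbl Nb i)))
        (sqrt (vecchia_D d K s2 Nb i)) (x $ i))"

definition cond_density_first ::
  "nat \<Rightarrow> (real vec \<Rightarrow> real) \<Rightarrow> real vec \<Rightarrow> real vec \<Rightarrow> real" where
  "cond_density_first np f yp y =
     f (yp @\<^sub>v y) / (\<integral>z. f (vec np z @\<^sub>v y) \<partial>(PiM {..<np} (\<lambda>_. lborel)))"

definition mvn_density :: "nat \<Rightarrow> real vec \<Rightarrow> real mat \<Rightarrow> real vec \<Rightarrow> real" where
  "mvn_density k mu S x =
     exp (- (1/2) * ((x - mu) \<bullet> (minv S *\<^sub>v (x - mu)))) / sqrt ((2 * pi) ^ k * det S)"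

end

theory Submission
  imports Defs
begin

definition qf :: "nat \<Rightarrow> (nat \<Rightarrow> nat \<Rightarrow> real) \<Rightarrow> (nat \<Rightarrow> real) \<Rightarrow> real" where
  "qf k Q u = (\<Sum>i<k. \<Sum>j<k. Q i j * u i * u j)"

lemma qf_cong: "(\<And>i. i < k \<Longrightarrow> u i = v i) \<Longrightarrow> qf k Q u = qf k Q v"
  unfolding qf_def by (intro sum.cong refl) auto

lemma qf_split:
  assumes sym: "\<And>i. i < k \<Longrightarrow> Q i k = Q k i" and a: "Q k k \<noteq> 0"
  shows "qf (Suc k) Q u = qf k (\<lambda>i j. Q i j - Q i k * Q k j / Q k k) u
     + Q k k * (u k + (\<Sum>j<k. Q k j * u j) / Q k k)^2"
proof -
  define a where "a = Q k k"
  define c where "c = (\<Sum>j<k. Q k j * u j)"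
  have 1: "qf (Suc k) Q u = (\<Sum>i<k. \<Sum>j<k. Q i j * u i * u j) + (\<Sum>i<k. Q i k * u i * u k)
      + (\<Sum>j<k. Q k j * u k * u j) + a * u k * u k"
    unfolding qf_def a_def by (simp add: sum.distrib algebra_simps)
  have 2: "(\<Sum>i<k. Q i k * u i * u k) = c * u k"
    unfolding c_def sum_distrib_right by (intro sum.cong refl) (simp add: sym)
  have 3: "(\<Sum>j<k. Q k j * u k * u j) = c * u k"
    unfolding c_def sum_distrib_right by (intro sum.cong refl) simp
  have 4: "qf k (\<lambda>i j. Q i j - Q i k * Q k j / a) u = (\<Sum>i<k. \<Sum>j<k. Q i j * u i * u j) - c * c / a"
  proof -
    have "(\<Sum>i<k. \<Sum>j<k. Q i k * Q k j / a * u i * u j) = (\<Sum>i<k. Q i k * u i) * (\<Sum>j<k. Q k j * u j) / a"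
      by (simp add: sum_product sum_divide_distrib algebra_simps)
    also have "(\<Sum>i<k. Q i k * u i) = c" unfolding c_def by (intro sum.cong refl) (simp add: sym)
    finally have "(\<Sum>i<k. \<Sum>j<k. Q i k * Q k j / a * u i * u j) = c * c / a" unfolding c_def by simp
    then show ?thesis unfolding qf_def by (simp add: algebra_simps sum_subtractf)
  qed
  have a0: "a \<noteq> 0" using a a_def by simp
  show ?thesis unfolding a_def[symmetric] c_def[symmetric] 1 2 3 4 using a0
    by (simp add: field_simps power2_eq_square)
qed

lemma gauss1:
  assumes a: "(a::real) > 0"
  shows "(\<integral>\<^sup>+ t. ennreal (exp (- (a * (t - \<mu>)^2) / 2)) \<partial>lborel) = ennreal (sqrt (2 * pi / a))"
proof -
  have eq: "exp (- (a * (t - \<mu>)^2) / 2) = sqrt (2 * pi / a) * normal_density \<mu> (1 / sqrt a) t" for t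
    using a by (simp add: normal_density_def power_divide real_sqrt_divide field_simps)
  have "(\<integral>\<^sup>+ t. ennreal (exp (- (a * (t - \<mu>)^2) / 2)) \<partial>lborel)
      = (\<integral>\<^sup>+ t. ennreal (sqrt (2 * pi / a)) * ennreal (normal_density \<mu> (1 / sqrt a) t) \<partial>lborel)"
    by (intro nn_integral_cong, subst eq, rule ennreal_mult) (use a in auto)
  also have "\<dots> = ennreal (sqrt (2 * pi / a)) * (\<integral>\<^sup>+ t. ennreal (normal_density \<mu> (1 / sqrt a) t) \<partial>lborel)"
    by (rule nn_integral_cmult) simp
  also have "(\<integral>\<^sup>+ t. ennreal (normal_density \<mu> (1 / sqrt a) t) \<partial>lborel) = 1"
    using a by (subst nn_integral_eq_integral) (simp_all add: integrable_normal_density integral_normal_density)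
  finally show ?thesis by simp
qed

lemma det_step:
  fixes Q :: "nat \<Rightarrow> nat \<Rightarrow> real"
  assumes sym: "\<And>i. i < k \<Longrightarrow> Q i k = Q k i" and a: "Q k k \<noteq> 0"
  shows "det (mat (Suc k) (Suc k) (\<lambda>(i,j). Q i j))
       = Q k k * det (mat k k (\<lambda>(i,j). Q i j - Q i k * Q k j / Q k k))"
proof -
  define a where "a = Q k k"
  define S where "S = (\<lambda>i j. Q i j - Q i k * Q k j / a)"
  define L where "L = mat (Suc k) (Suc k) (\<lambda>(i,j). if i = j then 1 else if j = k then Q i k / a else (0::real))"
  define M where "M = mat (Suc k) (Suc k) (\<lambda>(i,j). if i < k \<and> j < k then S i j else if i = k then Q k j else (0::real))"
  have a0: "a \<noteq> 0" using a a_def by simp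
  have LM: "mat (Suc k) (Suc k) (\<lambda>(i,j). Q i j) = L * M"
  proof (rule eq_matI)
    fix i j assume i: "i < dim_row (L * M)" and j: "j < dim_col (L * M)"
    then have i: "i < Suc k" and j: "j < Suc k" by (auto simp: L_def M_def)
    have "(L * M) $$ (i,j) = (\<Sum>l<Suc k. L $$ (i,l) * M $$ (l,j))"
      using i j by (simp add: L_def M_def scalar_prod_def atLeast0LessThan)
    also have "\<dots> = (\<Sum>l<k. L $$ (i,l) * M $$ (l,j)) + L $$ (i,k) * M $$ (k,j)" by simp
    also have "(\<Sum>l<k. L $$ (i,l) * M $$ (l,j)) = (\<Sum>l<k. if l = i then M $$ (i,j) else 0)"
      using i by (intro sum.cong refl) (auto simp: L_def)
    also have "\<dots> = (if i < k then M $$ (i,j) else 0)" by (simp add: sum.delta)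
    finally have e: "(L * M) $$ (i,j) = (if i < k then M $$ (i,j) else 0) + L $$ (i,k) * M $$ (k,j)" .
    show "mat (Suc k) (Suc k) (\<lambda>(i,j). Q i j) $$ (i,j) = (L * M) $$ (i,j)"
      unfolding e using i j a0 by (auto simp: L_def M_def S_def a_def less_Suc_eq)
  qed (auto simp: L_def M_def)
  have dL: "det L = 1"
  proof -
    have "det L = prod_list (diag_mat L)"
      by (rule det_upper_triangular[of _ "Suc k"]) (auto simp: upper_triangular_def L_def)
    also have "\<dots> = 1" unfolding prod_list_diag_prod by (simp add: L_def)
    finally show ?thesis .
  qed
  have Mc: "M \<in> carrier_mat (Suc k) (Suc k)" by (simp add: M_def)
  have dM: "det M = a * det (mat k k (\<lambda>(i,j). S i j))"
  proof -
    have "det M = (\<Sum>i<Suc k. M $$ (i,k) * cofactor M i k)"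
      by (rule laplace_expansion_column[OF Mc]) simp
    also have "\<dots> = M $$ (k,k) * cofactor M k k" by (simp add: M_def)
    also have "mat_delete M k k = mat k k (\<lambda>(i,j). S i j)"
      by (rule eq_matI) (auto simp: mat_delete_def M_def)
    then have "cofactor M k k = det (mat k k (\<lambda>(i,j). S i j))"
      by (simp add: cofactor_def)
    finally show ?thesis by (simp add: M_def a_def)
  qed
  have "det (L * M) = det L * det M" by (rule det_mult[of L "Suc k"]) (auto simp: L_def M_def)
  then show ?thesis
    unfolding LM using dL dM by (simp add: a_def S_def)
qed

lemma qf_meas:
  assumes "{..<n} \<subseteq> I"
  shows "(\<lambda>z. qf n Q (\<lambda>i. z i - m i)) \<in> borel_measurable (PiM I (\<lambda>_. lborel))"
proof -
  have c: "(\<lambda>z. z i) \<in> borel_measurable (PiM I (\<lambda>_. lborel))" if "i \<in> {..<n}" for i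
    using measurable_component_singleton[of i I "\<lambda>_. lborel"] that assms by auto
  show ?thesis unfolding qf_def
    by (intro borel_measurable_sum borel_measurable_times borel_measurable_diff borel_measurable_const) (auto intro!: c)
qed

lemma psf_lborel: "product_sigma_finite (\<lambda>_::nat. lborel :: real measure)"
  by (simp add: product_sigma_finite_def lborel.sigma_finite_measure_axioms)

lemma gauss_nn:
  assumes "\<And>i j. i < k \<Longrightarrow> j < k \<Longrightarrow> Q i j = Q j i"
    and "\<And>u. (\<exists>i<k. u i \<noteq> 0) \<Longrightarrow> qf k Q u > 0"
  shows "(\<integral>\<^sup>+ z. ennreal (exp (- qf k Q (\<lambda>i. z i - m i) / 2)) \<partial>PiM {..<k} (\<lambda>_. lborel))
       = ennreal (sqrt ((2*pi)^k / det (mat k k (\<lambda>(i,j). Q i j))))"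
  using assms
proof (induction k arbitrary: Q m)
  case 0
  interpret product_sigma_finite "\<lambda>_::nat. lborel :: real measure" by (rule psf_lborel)
  have "mat 0 0 (\<lambda>(i,j). Q i j) \<in> carrier_mat 0 0" by simp
  then have "det (mat 0 0 (\<lambda>(i,j). Q i j)) = 1" by (simp add: det_def)
  then show ?case by (simp add: nn_integral_empty qf_def PiM_empty)
next
  case (Suc k)
  interpret product_sigma_finite "\<lambda>_::nat. lborel :: real measure" by (rule psf_lborel)
  define a where "a = Q k k"
  define S where "S = (\<lambda>i j. Q i j - Q i k * Q k j / Q k k)"
  have symk: "\<And>i. i < k \<Longrightarrow> Q i k = Q k i" using Suc.prems(1) by auto
  have "qf (Suc k) Q (\<lambda>i. if i = k then 1 else 0) > 0" by (rule Suc.prems(2)) auto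
  then have apos: "a > 0" unfolding a_def qf_def by (simp add: if_distrib cong: if_cong)
  then have a0: "Q k k \<noteq> 0" unfolding a_def by simp
  have Ssym: "\<And>i j. i < k \<Longrightarrow> j < k \<Longrightarrow> S i j = S j i"
    unfolding S_def using Suc.prems(1) by (simp add: mult.commute)
  have Spd: "qf k S u > 0" if "\<exists>i<k. u i \<noteq> 0" for u
  proof -
    define u' where "u' = u(k := - (\<Sum>j<k. Q k j * u j) / Q k k)"
    have c: "(\<Sum>j<k. Q k j * u' j) = (\<Sum>j<k. Q k j * u j)" unfolding u'_def by (intro sum.cong) auto
    have "qf (Suc k) Q u' > 0" by (rule Suc.prems(2)) (use that in \<open>auto simp: u'_def\<close>)
    also have "qf (Suc k) Q u' = qf k S u' + Q k k * (u' k + (\<Sum>j<k. Q k j * u' j) / Q k k)^2"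
      unfolding S_def by (rule qf_split[of k Q, OF symk a0])
    also have "u' k + (\<Sum>j<k. Q k j * u' j) / Q k k = 0" unfolding c by (simp add: u'_def)
    also have "qf k S u' = qf k S u" by (rule qf_cong) (auto simp: u'_def)
    finally show ?thesis by simp
  qed
  note IH = Suc.IH[OF Ssym Spd]
  have ins: "{..<Suc k} = insert k {..<k}" by auto
  have meas: "(\<lambda>z. ennreal (exp (- qf (Suc k) Q (\<lambda>i. z i - m i) / 2))) \<in> borel_measurable (PiM (insert k {..<k}) (\<lambda>_. lborel))"
  proof -
    have [measurable]: "(\<lambda>z. qf (Suc k) Q (\<lambda>i. z i - m i)) \<in> borel_measurable (PiM (insert k {..<k}) (\<lambda>_. lborel))"
      by (rule qf_meas) auto
    show ?thesis by measurable
  qed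
  have inner: "(\<integral>\<^sup>+ t. ennreal (exp (- qf (Suc k) Q (\<lambda>i. (x(k := t)) i - m i) / 2)) \<partial>lborel)
      = ennreal (exp (- qf k S (\<lambda>i. x i - m i) / 2)) * ennreal (sqrt (2 * pi / a))" for x
  proof -
    define c where "c = (\<Sum>j<k. Q k j * (x j - m j))"
    have "(\<integral>\<^sup>+ t. ennreal (exp (- qf (Suc k) Q (\<lambda>i. (x(k := t)) i - m i) / 2)) \<partial>lborel)
       = (\<integral>\<^sup>+ t. ennreal (exp (- qf k S (\<lambda>i. x i - m i) / 2)) * ennreal (exp (- (a * (t - (m k - c / a))^2) / 2)) \<partial>lborel)"
    proof (intro nn_integral_cong)
      fix t
      have "qf (Suc k) Q (\<lambda>i. (x(k := t)) i - m i) = qf k S (\<lambda>i. (x(k := t)) i - m i)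
          + Q k k * ((\<lambda>i. (x(k := t)) i - m i) k + (\<Sum>j<k. Q k j * (\<lambda>i. (x(k := t)) i - m i) j) / Q k k)^2"
        unfolding S_def by (rule qf_split[of k Q, OF symk a0])
      also have "qf k S (\<lambda>i. (x(k := t)) i - m i) = qf k S (\<lambda>i. x i - m i)" by (rule qf_cong) auto
      also have "(\<Sum>j<k. Q k j * (\<lambda>i. (x(k := t)) i - m i) j) = c" unfolding c_def by (intro sum.cong) auto
      finally have e: "qf (Suc k) Q (\<lambda>i. (x(k := t)) i - m i) = qf k S (\<lambda>i. x i - m i) + a * (t - (m k - c / a))^2"
        by (simp add: a_def algebra_simps)
      show "ennreal (exp (- qf (Suc k) Q (\<lambda>i. (x(k := t)) i - m i) / 2))
         = ennreal (exp (- qf k S (\<lambda>i. x i - m i) / 2)) * ennreal (exp (- (a * (t - (m k - c / a))^2) / 2))"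
        unfolding e by (subst ennreal_mult[symmetric]) (auto simp: exp_add[symmetric] diff_divide_distrib)
    qed
    also have "\<dots> = ennreal (exp (- qf k S (\<lambda>i. x i - m i) / 2)) * (\<integral>\<^sup>+ t. ennreal (exp (- (a * (t - (m k - c / a))^2) / 2)) \<partial>lborel)"
      by (rule nn_integral_cmult) simp
    also have "\<dots> = ennreal (exp (- qf k S (\<lambda>i. x i - m i) / 2)) * ennreal (sqrt (2 * pi / a))"
      unfolding gauss1[OF apos] ..
    finally show ?thesis .
  qed
  have "(\<integral>\<^sup>+ z. ennreal (exp (- qf (Suc k) Q (\<lambda>i. z i - m i) / 2)) \<partial>PiM {..<Suc k} (\<lambda>_. lborel))
     = (\<integral>\<^sup>+ x. (\<integral>\<^sup>+ t. ennreal (exp (- qf (Suc k) Q (\<lambda>i. (x(k := t)) i - m i) / 2)) \<partial>lborel) \<partial>PiM {..<k} (\<lambda>_. lborel))"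
    unfolding ins by (rule product_nn_integral_insert[OF _ _ meas]) auto
  also have "\<dots> = (\<integral>\<^sup>+ x. ennreal (exp (- qf k S (\<lambda>i. x i - m i) / 2)) * ennreal (sqrt (2 * pi / a)) \<partial>PiM {..<k} (\<lambda>_. lborel))"
    by (intro nn_integral_cong) (rule inner)
  also have "\<dots> = (\<integral>\<^sup>+ x. ennreal (exp (- qf k S (\<lambda>i. x i - m i) / 2)) \<partial>PiM {..<k} (\<lambda>_. lborel)) * ennreal (sqrt (2 * pi / a))"
  proof (rule nn_integral_multc)
    have [measurable]: "(\<lambda>z. qf k S (\<lambda>i. z i - m i)) \<in> borel_measurable (PiM {..<k} (\<lambda>_. lborel))"
      by (rule qf_meas) auto
    show "(\<lambda>x. ennreal (exp (- qf k S (\<lambda>i. x i - m i) / 2))) \<in> borel_measurable (PiM {..<k} (\<lambda>_. lborel))"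
      by measurable
  qed
  also have "\<dots> = ennreal (sqrt ((2*pi)^k / det (mat k k (\<lambda>(i,j). S i j)))) * ennreal (sqrt (2 * pi / a))"
    using IH[of m] by simp
  also have "\<dots> = ennreal (sqrt ((2*pi)^k / det (mat k k (\<lambda>(i,j). S i j))) * sqrt (2 * pi / a))"
    by (rule ennreal_mult''[symmetric]) (use apos in simp)
  also have "sqrt ((2*pi)^k / det (mat k k (\<lambda>(i,j). S i j))) * sqrt (2 * pi / a)
      = sqrt ((2*pi)^Suc k / det (mat (Suc k) (Suc k) (\<lambda>(i,j). Q i j)))"
  proof -
    have dQ: "det (mat (Suc k) (Suc k) (\<lambda>(i,j). Q i j)) = a * det (mat k k (\<lambda>(i,j). S i j))"
      using det_step[of k Q, OF symk a0] by (simp add: S_def a_def)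
    show ?thesis unfolding dQ real_sqrt_mult[symmetric] using apos
      by (cases "det (mat k k (\<lambda>(i,j). S i j)) = 0") (simp_all add: field_simps)
  qed
  finally show ?case .
qed

lemma qf_Suc:
  "qf (Suc k) Q w = qf k Q w + (\<Sum>a<k. Q a k * w a) * w k + (\<Sum>b<k. Q k b * w b) * w k + Q k k * w k * w k"
  unfolding qf_def by (simp add: sum.distrib sum_distrib_right sum_distrib_left algebra_simps)

lemma jnf_qf:
  assumes "A \<in> carrier_mat k k" "v \<in> carrier_vec k"
  shows "v \<bullet> (A *\<^sub>v v) = qf k (\<lambda>i j. A $$ (i,j)) (\<lambda>i. v $ i)"
  using assms unfolding qf_def
  by (simp add: scalar_prod_def atLeast0LessThan sum_distrib_left algebra_simps)

lemma minv_inv: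
  assumes A: "A \<in> carrier_mat n n" and d: "det A \<noteq> 0"
  shows "A * minv A = 1\<^sub>m n" "minv A * A = 1\<^sub>m n" "minv A \<in> carrier_mat n n"
proof -
  have "mat_inverse A \<noteq> None"
    using mat_inverse(1)[OF A, where b="()"] det_non_zero_imp_unit[OF A d, where b="()"] by blast
  then obtain B where B: "mat_inverse A = Some B" by auto
  then have "minv A = B" by (simp add: minv_def)
  with mat_inverse(2)[OF A B] show "A * minv A = 1\<^sub>m n" "minv A * A = 1\<^sub>m n" "minv A \<in> carrier_mat n n"
    by auto
qed

lemma least_nth:
  assumes "distinct rs" "a < length rs"
  shows "(LEAST a'. rs ! a' = rs ! a) = a"
proof (rule Least_equality)
  fix y assume "rs ! y = rs ! a"
  then show "a \<le> y" using assms nth_eq_iff_index_eq[of rs y a] by (cases "y < a") auto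
qed simp

lemma qf_embed:
  assumes d: "distinct rs" and sub: "set rs \<subseteq> {..<N}"
  shows "qf (length rs) (\<lambda>a b. C (rs ! a) (rs ! b)) w
       = qf N C (\<lambda>p. if p \<in> set rs then w (LEAST a. rs ! a = p) else 0)"
proof -
  define x where "x = (\<lambda>p. if p \<in> set rs then w (LEAST a. rs ! a = p) else 0)"
  have fin: "finite (set rs)" by simp
  have bij: "bij_betw ((!) rs) {..<length rs} (set rs)"
    using d by (simp add: bij_betw_nth lessThan_atLeast0)
  have "qf N C x = (\<Sum>p\<in>set rs. \<Sum>q<N. C p q * x p * x q)"
    unfolding qf_def by (rule sum.mono_neutral_right) (use sub in \<open>auto simp: x_def\<close>)
  also have "\<dots> = (\<Sum>p\<in>set rs. \<Sum>q\<in>set rs. C p q * x p * x q)"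
    by (intro sum.cong refl sum.mono_neutral_right) (use sub in \<open>auto simp: x_def\<close>)
  also have "\<dots> = (\<Sum>a<length rs. \<Sum>b<length rs. C (rs!a) (rs!b) * x (rs!a) * x (rs!b))"
    by (simp add: sum.reindex_bij_betw[OF bij, symmetric])
  also have "\<dots> = qf (length rs) (\<lambda>a b. C (rs ! a) (rs ! b)) w"
    unfolding qf_def by (intro sum.cong refl) (simp add: x_def d least_nth)
  finally show ?thesis unfolding x_def by simp
qed

lemma qf_cong2:
  "(\<And>i j. i < k \<Longrightarrow> j < k \<Longrightarrow> Q i j = Q' i j) \<Longrightarrow> (\<And>i. i < k \<Longrightarrow> u i = v i) \<Longrightarrow> qf k Q u = qf k Q' v"
  unfolding qf_def by (intro sum.cong refl) auto

lemma qf_neg: "qf k Q (\<lambda>i. - u i) = qf k Q u"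
  unfolding qf_def by simp

lemma qf_C_lower:
  assumes "\<And>x. qf N K x \<ge> 0"
  shows "qf N (\<lambda>p q. K p q + (if p = q then s2 else 0)) x = qf N K x + s2 * (\<Sum>p<N. (x p)^2)"
proof -
  have "qf N (\<lambda>p q. K p q + (if p = q then s2 else 0)) x
      = (\<Sum>i<N. \<Sum>j<N. K i j * x i * x j + (if i = j then s2 * x i * x j else 0))"
    unfolding qf_def by (intro sum.cong refl) (auto simp: algebra_simps)
  also have "\<dots> = qf N K x + (\<Sum>i<N. s2 * x i * x i)"
    unfolding qf_def sum.distrib by (simp add: sum.delta)
  finally show ?thesis by (simp add: sum_distrib_left power2_eq_square mult.assoc)
qed

lemma vecchia_D_pos:
  assumes K: "K \<in> carrier_mat N N" and Ksym: "K\<^sup>T = K"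
    and Kpsd: "\<And>x. qf N (\<lambda>p q. K $$ (p,q)) x \<ge> 0"
    and s2: "s2 > 0" and Nb: "Nb i \<subseteq> {..<i}" and i: "i < N"
  shows "vecchia_D N K s2 Nb i > 0"
proof -
  have hK: "K $$ (p,q) = K $$ (q,p)" if "p < N" "q < N" for p q
    using that K by (metis Ksym carrier_matD index_transpose_mat(1))
  define ns where "ns = nbl Nb i"
  define L where "L = length ns"
  have fin: "finite (Nb i)" using Nb finite_subset by blast
  have setns: "set ns = Nb i" and dns: "distinct ns"
    using fin by (auto simp: ns_def nbl_def)
  have nslt: "ns ! a < i" if "a < L" for a using that setns Nb nth_mem[of a ns] by (auto simp: L_def)
  have nsltN: "ns ! a < N" if "a < L" for a using nslt[OF that] i by simp
  define Cf where "Cf = (\<lambda>p q. K $$ (p,q) + (if p = q then s2 else 0))"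
  define Cm where "Cm = K + s2 \<cdot>\<^sub>m 1\<^sub>m N"
  have Cm_idx: "Cm $$ (p,q) = Cf p q" if "p < N" "q < N" for p q
    using that K by (simp add: Cm_def Cf_def)
  define Cn where "Cn = sub_mat Cm ns ns"
  have Cn: "Cn \<in> carrier_mat L L" by (simp add: Cn_def sub_mat_def L_def)
  have Cn_idx: "Cn $$ (a,b) = Cf (ns!a) (ns!b)" if "a < L" "b < L" for a b
  proof -
    have "ns!a < N" "ns!b < N" using nslt that i by (auto intro: less_trans)
    then show ?thesis using that by (simp add: Cn_def sub_mat_def L_def Cm_idx)
  qed
  have Cf_lower: "qf N Cf x \<ge> s2 * (\<Sum>p<N. (x p)^2)" for x
    unfolding Cf_def qf_C_lower[OF Kpsd] using Kpsd[of x] by simp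
  have Cf_pos: "qf N Cf x \<ge> s2 * (x p)^2" if "p < N" for x p
  proof -
    have "(x p)^2 \<le> (\<Sum>p<N. (x p)^2)" by (rule member_le_sum) (use that in auto)
    then show ?thesis using Cf_lower[of x] s2 by (smt (verit) mult_left_mono)
  qed
  have nsN: "set ns \<subseteq> {..<N}"
  proof
    fix p assume "p \<in> set ns"
    then obtain a where "a < L" "p = ns ! a" by (auto simp: in_set_conv_nth L_def)
    then show "p \<in> {..<N}" using nslt[of a] i by simp
  qed
  have Cn_pd: "v \<bullet> (Cn *\<^sub>v v) > 0" if v: "v \<in> carrier_vec L" "v \<noteq> 0\<^sub>v L" for v
  proof -
    obtain a where a: "a < L" "v $ a \<noteq> 0" using v by (metis eq_vecI carrier_vecD index_zero_vec)
    have "v \<bullet> (Cn *\<^sub>v v) = qf L (\<lambda>a b. Cn $$ (a,b)) (\<lambda>a. v $ a)" by (rule jnf_qf[OF Cn v(1)])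
    also have "\<dots> = qf L (\<lambda>a b. Cf (ns!a) (ns!b)) (\<lambda>a. v $ a)" by (rule qf_cong2) (auto simp: Cn_idx)
    also have "\<dots> = qf N Cf (\<lambda>p. if p \<in> set ns then v $ (LEAST a. ns ! a = p) else 0)"
      unfolding L_def by (rule qf_embed[OF dns nsN])
    also have "\<dots> \<ge> s2 * (v $ a)^2"
      using Cf_pos[of "ns ! a" "\<lambda>p. if p \<in> set ns then v $ (LEAST a. ns ! a = p) else 0"] a nsN nslt[of a] i
      by (auto simp: least_nth[OF dns] L_def)
    finally show ?thesis using a s2 by (smt (verit) mult_pos_pos zero_less_power2)
  qed
  have dCn: "det Cn \<noteq> 0"
  proof
    assume "det Cn = 0"
    then obtain v where v: "v \<in> carrier_vec L" "v \<noteq> 0\<^sub>v L" "Cn *\<^sub>v v = 0\<^sub>v L"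
      using det_0_iff_vec_prod_zero[OF Cn] by blast
    then show False using Cn_pd[OF v(1,2)] by simp
  qed
  define W where "W = minv Cn"
  have W: "W \<in> carrier_mat L L" "W * Cn = 1\<^sub>m L" using minv_inv[OF Cn dCn] by (auto simp: W_def)
  have CnT: "Cn\<^sup>T = Cn"
    by (rule eq_matI) (use Cn in \<open>auto simp: Cn_idx Cf_def hK[OF nsltN nsltN]\<close>)
  have CnWT: "Cn * W\<^sup>T = 1\<^sub>m L"
    using transpose_mult[OF W(1) Cn] W(2) CnT by simp
  define kv where "kv = vec L (\<lambda>a. K $$ (i, ns ! a))"
  define \<alpha> where "\<alpha> = W\<^sup>T *\<^sub>v kv"
  have kv: "kv \<in> carrier_vec L" by (simp add: kv_def)
  have al: "\<alpha> \<in> carrier_vec L" using W by (simp add: \<alpha>_def kv_def)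
  have Cal: "Cn *\<^sub>v \<alpha> = kv"
    unfolding \<alpha>_def using W(1) Cn kv by (simp add: assoc_mult_mat_vec[symmetric] CnWT)
  have Adef: "vecchia_A N K s2 Nb i = \<alpha>"
    by (simp add: vecchia_A_def \<alpha>_def W_def Cn_def Cm_def kv_def L_def ns_def Let_def)
  have kv': "vec (length ns) (\<lambda>a. K $$ (ns ! a, i)) = kv"
    by (rule eq_vecI) (auto simp: kv_def L_def hK[OF nsltN i])
  have ak: "\<alpha> \<bullet> kv = (\<Sum>a<L. \<alpha> $ a * K $$ (i, ns!a))"
    using al by (simp add: scalar_prod_def kv_def atLeast0LessThan)
  have Dval: "vecchia_D N K s2 Nb i = Cf i i - \<alpha> \<bullet> kv"
  proof -
    have "vecchia_D N K s2 Nb i = K$$(i,i) + s2 - \<alpha> \<bullet> vec (length ns) (\<lambda>a. K$$(ns!a,i))"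
      by (simp add: vecchia_D_def Adef ns_def Let_def)
    then show ?thesis by (simp add: kv' Cf_def)
  qed
  define rs where "rs = ns @ [i]"
  have ins: "i \<notin> set ns" using setns Nb by auto
  have drs: "distinct rs" using dns ins by (simp add: rs_def)
  have rsN: "set rs \<subseteq> {..<N}" using nsN i by (simp add: rs_def)
  have lrs: "length rs = Suc L" by (simp add: rs_def L_def)
  have nsmem: "ns ! a \<in> set ns" if "a < L" for a using that by (simp add: L_def)
  have rsa: "rs ! a = ns ! a" if "a < L" for a using that by (simp add: rs_def nth_append L_def)
  have rsL: "rs ! L = i" by (simp add: rs_def nth_append L_def)
  define w where "w = (\<lambda>a. if a < L then - (\<alpha> $ a) else 1)"
  define x where "x = (\<lambda>p. if p \<in> set rs then w (LEAST a. rs ! a = p) else 0)"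
  have xi: "x i = 1"
  proof -
    have "(LEAST a. rs ! a = i) = L" using least_nth[OF drs, of L] rsL lrs by simp
    then show ?thesis by (simp add: x_def rs_def w_def)
  qed
  have "qf (length rs) (\<lambda>a b. Cf (rs ! a) (rs ! b)) w = qf N Cf x"
    unfolding x_def by (rule qf_embed[OF drs rsN])
  also have "\<dots> \<ge> s2" using Cf_pos[OF i, of x] xi by simp
  finally have pos: "qf (Suc L) (\<lambda>a b. Cf (rs ! a) (rs ! b)) w \<ge> s2" unfolding lrs .
  have t1: "qf L (\<lambda>a b. Cf (rs ! a) (rs ! b)) w = \<alpha> \<bullet> kv"
  proof -
    have "qf L (\<lambda>a b. Cf (rs ! a) (rs ! b)) w = qf L (\<lambda>a b. Cn $$ (a,b)) (\<lambda>a. - (\<alpha> $ a))"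
      by (rule qf_cong2) (auto simp: rsa Cn_idx w_def)
    also have "\<dots> = \<alpha> \<bullet> (Cn *\<^sub>v \<alpha>)" unfolding qf_neg by (rule jnf_qf[OF Cn al, symmetric])
    finally show ?thesis by (simp add: Cal)
  qed
  have t2: "(\<Sum>a<L. Cf (rs ! a) (rs ! L) * w a) = - (\<alpha> \<bullet> kv)"
    unfolding ak sum_negf[symmetric]
    by (intro sum.cong refl) (use ins nsmem in \<open>auto simp: rsa rsL w_def Cf_def hK[OF nsltN i]\<close>)
  have t3: "(\<Sum>b<L. Cf (rs ! L) (rs ! b) * w b) = - (\<alpha> \<bullet> kv)"
    unfolding ak sum_negf[symmetric]
    by (intro sum.cong refl) (use ins nsmem in \<open>auto simp: rsa rsL w_def Cf_def hK[OF nsltN i]\<close>)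
  have "qf (Suc L) (\<lambda>a b. Cf (rs ! a) (rs ! b)) w = Cf i i - \<alpha> \<bullet> kv"
    unfolding qf_Suc t1 t2 t3 by (simp add: rsL w_def)
  then show ?thesis using pos s2 Dval by simp
qed

lemma minv_carrier: "A \<in> carrier_mat n n \<Longrightarrow> minv A \<in> carrier_mat n n"
  unfolding minv_def using mat_inverse(2)[of A n] by (auto split: option.splits)

lemma vecchia_A_dim: "vecchia_A N K s2 Nb i \<in> carrier_vec (length (nbl Nb i))"
proof -
  have "minv (sub_mat (K + s2 \<cdot>\<^sub>m 1\<^sub>m N) (nbl Nb i) (nbl Nb i)) \<in> carrier_mat (length (nbl Nb i)) (length (nbl Nb i))"
    by (rule minv_carrier) (simp add: sub_mat_def)
  then show ?thesis by (simp add: vecchia_A_def Let_def)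
qed

lemma vecchia_resid:
  assumes Nb: "Nb i \<subseteq> {..<i}" and i: "i < N" and w: "w \<in> carrier_vec N"
  shows "(vecchia_B N K s2 Nb *\<^sub>v w) $ i = w $ i - vecchia_A N K s2 Nb i \<bullet> sub_vec w (nbl Nb i)"
proof -
  define ns where "ns = nbl Nb i"
  define L where "L = length ns"
  define A where "A = vecchia_A N K s2 Nb i"
  have fin: "finite (Nb i)" using Nb finite_subset by blast
  have setns: "set ns = Nb i" and dns: "distinct ns"
    using fin by (auto simp: ns_def nbl_def)
  have ins: "i \<notin> Nb i" using Nb by auto
  have NbN: "Nb i \<subseteq> {..<N}" using Nb i by auto
  have A: "A \<in> carrier_vec L" unfolding A_def L_def ns_def by (rule vecchia_A_dim)
  have "(vecchia_B N K s2 Nb *\<^sub>v w) $ i = (\<Sum>j<N. vecchia_B N K s2 Nb $$ (i,j) * w $ j)"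
    using i w by (simp add: vecchia_B_def scalar_prod_def row_def atLeast0LessThan)
  also have "\<dots> = (\<Sum>j<N. (if j = i then w $ i else 0) - (if j \<in> Nb i then A $ (LEAST a. ns ! a = j) * w $ j else 0))"
    using i ins by (intro sum.cong refl) (auto simp: vecchia_B_def A_def ns_def)
  also have "\<dots> = w $ i - (\<Sum>j\<in>Nb i. A $ (LEAST a. ns ! a = j) * w $ j)"
    unfolding sum_subtractf using i NbN by (simp add: sum.inter_restrict[symmetric] Int_absorb1)
  also have "(\<Sum>j\<in>Nb i. A $ (LEAST a. ns ! a = j) * w $ j) = (\<Sum>a<L. A $ a * w $ (ns ! a))"
  proof -
    have bij: "bij_betw ((!) ns) {..<L} (Nb i)"
      using dns setns by (simp add: bij_betw_nth lessThan_atLeast0 L_def)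
    show ?thesis
      by (simp add: sum.reindex_bij_betw[OF bij, symmetric] least_nth[OF dns] L_def)
  qed
  also have "\<dots> = A \<bullet> sub_vec w ns"
    by (simp add: scalar_prod_def sub_vec_def L_def atLeast0LessThan)
  finally show ?thesis by (simp add: A_def ns_def)
qed

lemma exp_sum_half: "exp (- (\<Sum>i<(N::nat). f i) / (2::real)) = (\<Prod>i<N. exp (- f i / 2))"
proof -
  have "- (\<Sum>i<N. f i) / 2 = (\<Sum>i<N. - f i / 2)" by (simp add: sum_negf sum_divide_distrib)
  then show ?thesis using exp_sum[of "{..<N}" "\<lambda>i. - f i / 2"] by simp
qed

lemma vecchia_density_eq:
  assumes Nb: "\<And>i. i < N \<Longrightarrow> Nb i \<subseteq> {..<i}"
    and Dpos: "\<And>i. i < N \<Longrightarrow> vecchia_D N K s2 Nb i > 0"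
    and x: "x \<in> carrier_vec N" and F: "F \<in> carrier_vec N"
  shows "vecchia_density N K s2 Nb F x
     = (\<Prod>i<N. 1 / sqrt (2 * pi * vecchia_D N K s2 Nb i))
       * exp (- (\<Sum>i<N. ((vecchia_B N K s2 Nb *\<^sub>v (x - F)) $ i)^2 / vecchia_D N K s2 Nb i) / 2)"
proof -
  have fac: "normal_density (F $ i + vecchia_A N K s2 Nb i \<bullet> (sub_vec x (nbl Nb i) - sub_vec F (nbl Nb i)))
        (sqrt (vecchia_D N K s2 Nb i)) (x $ i)
      = 1 / sqrt (2 * pi * vecchia_D N K s2 Nb i) * exp (- (((vecchia_B N K s2 Nb *\<^sub>v (x - F)) $ i)^2 / vecchia_D N K s2 Nb i) / 2)"
    if i: "i < N" for i
  proof -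
    have sub: "sub_vec x (nbl Nb i) - sub_vec F (nbl Nb i) = sub_vec (x - F) (nbl Nb i)"
    proof (rule eq_vecI)
      fix a assume "a < dim_vec (sub_vec (x - F) (nbl Nb i))"
      then have a: "a < length (nbl Nb i)" by (simp add: sub_vec_def)
      have fin: "finite (Nb i)" using Nb[OF i] finite_subset by blast
      have "nbl Nb i ! a \<in> Nb i" using a fin by (metis nbl_def nth_mem set_sorted_list_of_set)
      then have "nbl Nb i ! a < N" using Nb[OF i] i by auto
      then show "(sub_vec x (nbl Nb i) - sub_vec F (nbl Nb i)) $ a = sub_vec (x - F) (nbl Nb i) $ a"
        using a x F by (simp add: sub_vec_def)
    qed (simp add: sub_vec_def)
    have r: "(vecchia_B N K s2 Nb *\<^sub>v (x - F)) $ i = x $ i - (F $ i + vecchia_A N K s2 Nb i \<bullet> (sub_vec x (nbl Nb i) - sub_vec F (nbl Nb i)))"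
    proof -
      have xF: "x - F \<in> carrier_vec N" using x F by simp
      show ?thesis unfolding sub vecchia_resid[of Nb i N "x - F" K s2, OF Nb[OF i] i xF] using x F i by simp
    qed
    have D: "(sqrt (vecchia_D N K s2 Nb i))^2 = vecchia_D N K s2 Nb i" using Dpos[OF i] by simp
    show ?thesis unfolding normal_density_def D r by (simp add: power2_commute)
  qed
  have "vecchia_density N K s2 Nb F x = (\<Prod>i<N. 1 / sqrt (2 * pi * vecchia_D N K s2 Nb i) * exp (- (((vecchia_B N K s2 Nb *\<^sub>v (x - F)) $ i)^2 / vecchia_D N K s2 Nb i) / 2))"
    unfolding vecchia_density_def by (intro prod.cong refl) (simp add: fac)
  also have "\<dots> = (\<Prod>i<N. 1 / sqrt (2 * pi * vecchia_D N K s2 Nb i))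
       * exp (- (\<Sum>i<N. ((vecchia_B N K s2 Nb *\<^sub>v (x - F)) $ i)^2 / vecchia_D N K s2 Nb i) / 2)"
    unfolding exp_sum_half prod.distrib ..
  finally show ?thesis .
qed

lemma schur_props:
  assumes sym: "\<And>i j. i < Suc k \<Longrightarrow> j < Suc k \<Longrightarrow> Q i j = Q j i"
    and pd: "\<And>u. (\<exists>i<Suc k. u i \<noteq> 0) \<Longrightarrow> qf (Suc k) Q u > 0"
  shows "Q k k > 0"
    "\<And>i j. i < k \<Longrightarrow> j < k \<Longrightarrow> (\<lambda>i j. Q i j - Q i k * Q k j / Q k k) i j = (\<lambda>i j. Q i j - Q i k * Q k j / Q k k) j i"
    "\<And>u. (\<exists>i<k. u i \<noteq> 0) \<Longrightarrow> qf k (\<lambda>i j. Q i j - Q i k * Q k j / Q k k) u > 0"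
proof -
  define S where "S = (\<lambda>i j. Q i j - Q i k * Q k j / Q k k)"
  have symk: "\<And>i. i < k \<Longrightarrow> Q i k = Q k i" using sym by auto
  have "qf (Suc k) Q (\<lambda>i. if i = k then 1 else 0) > 0" by (rule pd) auto
  then show apos: "Q k k > 0" unfolding qf_def by (simp add: if_distrib cong: if_cong)
  then have a0: "Q k k \<noteq> 0" by simp
  show "\<And>i j. i < k \<Longrightarrow> j < k \<Longrightarrow> (\<lambda>i j. Q i j - Q i k * Q k j / Q k k) i j = (\<lambda>i j. Q i j - Q i k * Q k j / Q k k) j i"
    using sym by (simp add: mult.commute)
  show "qf k (\<lambda>i j. Q i j - Q i k * Q k j / Q k k) u > 0" if "\<exists>i<k. u i \<noteq> 0" for u
  proof -
    define u' where "u' = u(k := - (\<Sum>j<k. Q k j * u j) / Q k k)"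
    have c: "(\<Sum>j<k. Q k j * u' j) = (\<Sum>j<k. Q k j * u j)" unfolding u'_def by (intro sum.cong) auto
    have "qf (Suc k) Q u' > 0" by (rule pd) (use that in \<open>auto simp: u'_def\<close>)
    also have "qf (Suc k) Q u' = qf k S u' + Q k k * (u' k + (\<Sum>j<k. Q k j * u' j) / Q k k)^2"
      unfolding S_def by (rule qf_split[of k Q, OF symk a0])
    also have "u' k + (\<Sum>j<k. Q k j * u' j) / Q k k = 0" unfolding c by (simp add: u'_def)
    also have "qf k S u' = qf k S u" by (rule qf_cong) (auto simp: u'_def)
    finally show ?thesis by (simp add: S_def)
  qed
qed

lemma det_pos:
  assumes "\<And>i j. i < k \<Longrightarrow> j < k \<Longrightarrow> Q i j = Q j i"
    and "\<And>u. (\<exists>i<k. u i \<noteq> 0) \<Longrightarrow> qf k Q u > 0"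
  shows "det (mat k k (\<lambda>(i,j). Q i j)) > 0"
  using assms
proof (induction k arbitrary: Q)
  case 0
  have "mat 0 0 (\<lambda>(i,j). Q i j) \<in> carrier_mat 0 0" by simp
  then show ?case by (simp add: det_def)
next
  case (Suc k)
  note sp = schur_props[of k Q, OF Suc.prems]
  have symk: "\<And>i. i < k \<Longrightarrow> Q i k = Q k i" using Suc.prems(1) by auto
  have a0: "Q k k \<noteq> 0" using sp(1) by simp
  have "det (mat k k (\<lambda>(i,j). Q i j - Q i k * Q k j / Q k k)) > 0"
    using Suc.IH[OF sp(2) sp(3)] by simp
  moreover have "det (mat (Suc k) (Suc k) (\<lambda>(i,j). Q i j)) = Q k k * det (mat k k (\<lambda>(i,j). Q i j - Q i k * Q k j / Q k k))"
    by (rule det_step[of k Q, OF symk a0])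
  ultimately show ?case using sp(1) by simp
qed

lemma gauss_jnf:
  assumes Q: "Q \<in> carrier_mat k k" and QT: "Q\<^sup>T = Q"
    and pd: "\<And>v. v \<in> carrier_vec k \<Longrightarrow> v \<noteq> 0\<^sub>v k \<Longrightarrow> v \<bullet> (Q *\<^sub>v v) > 0"
    and m: "m \<in> carrier_vec k"
  shows "(\<integral>z. exp (- (1/2) * ((vec k z - m) \<bullet> (Q *\<^sub>v (vec k z - m)))) \<partial>PiM {..<k} (\<lambda>_. lborel))
        = sqrt ((2*pi)^k / det Q)" (is ?A)
    and "det Q > 0" (is ?B)
proof -
  define Qf where "Qf = (\<lambda>i j. Q $$ (i,j))"
  have sym: "Qf i j = Qf j i" if "i < k" "j < k" for i j
    using that Q QT unfolding Qf_def by (metis carrier_matD index_transpose_mat(1))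
  have qpd: "qf k Qf u > 0" if "\<exists>i<k. u i \<noteq> 0" for u
  proof -
    from that obtain i where i: "i < k" "u i \<noteq> 0" by blast
    have v: "vec k u \<in> carrier_vec k" by simp
    have "vec k u \<noteq> 0\<^sub>v k" using i by (metis index_vec index_zero_vec(1))
    then have "vec k u \<bullet> (Q *\<^sub>v vec k u) > 0" using pd v by blast
    also have "vec k u \<bullet> (Q *\<^sub>v vec k u) = qf k Qf (\<lambda>i. vec k u $ i)" unfolding Qf_def by (rule jnf_qf[OF Q v])
    also have "\<dots> = qf k Qf u" by (rule qf_cong) simp
    finally show ?thesis .
  qed
  have Qm: "mat k k (\<lambda>(i,j). Qf i j) = Q" by (rule eq_matI) (use Q in \<open>auto simp: Qf_def\<close>)
  show dpos: ?B using det_pos[of k Qf, OF sym qpd] unfolding Qm by simp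
  have pt: "exp (- (1/2) * ((vec k z - m) \<bullet> (Q *\<^sub>v (vec k z - m)))) = exp (- qf k Qf (\<lambda>i. z i - m $ i) / 2)" for z
  proof -
    have v: "vec k z - m \<in> carrier_vec k" using m by simp
    have "(vec k z - m) \<bullet> (Q *\<^sub>v (vec k z - m)) = qf k Qf (\<lambda>i. (vec k z - m) $ i)"
      unfolding Qf_def by (rule jnf_qf[OF Q v])
    also have "\<dots> = qf k Qf (\<lambda>i. z i - m $ i)" by (rule qf_cong) (use m in simp)
    finally show ?thesis by simp
  qed
  have meas: "(\<lambda>z. exp (- qf k Qf (\<lambda>i. z i - m $ i) / 2)) \<in> borel_measurable (PiM {..<k} (\<lambda>_. lborel))"
  proof -
    have [measurable]: "(\<lambda>z. qf k Qf (\<lambda>i. z i - m $ i)) \<in> borel_measurable (PiM {..<k} (\<lambda>_. lborel))"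
      by (rule qf_meas) auto
    show ?thesis by measurable
  qed
  have "(\<integral>z. exp (- (1/2) * ((vec k z - m) \<bullet> (Q *\<^sub>v (vec k z - m)))) \<partial>PiM {..<k} (\<lambda>_. lborel))
      = (\<integral>z. exp (- qf k Qf (\<lambda>i. z i - m $ i) / 2) \<partial>PiM {..<k} (\<lambda>_. lborel))"
    unfolding pt ..
  also have "\<dots> = enn2real (\<integral>\<^sup>+ z. ennreal (exp (- qf k Qf (\<lambda>i. z i - m $ i) / 2)) \<partial>PiM {..<k} (\<lambda>_. lborel))"
    by (rule integral_eq_nn_integral[OF meas]) simp
  also have "\<dots> = enn2real (ennreal (sqrt ((2*pi)^k / det (mat k k (\<lambda>(i,j). Qf i j)))))"
    by (subst gauss_nn[of k Qf]) (auto intro: sym qpd)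
  also have "\<dots> = sqrt ((2*pi)^k / det Q)" unfolding Qm using dpos by simp
  finally show ?A .
qed

lemma bil:
  fixes M1 M2 S :: "real mat"
  assumes M1: "M1 \<in> carrier_mat a b1" and M2: "M2 \<in> carrier_mat a b2" and S: "S \<in> carrier_mat a a"
    and v1: "v1 \<in> carrier_vec b1" and v2: "v2 \<in> carrier_vec b2"
  shows "(M1 *\<^sub>v v1) \<bullet> (S *\<^sub>v (M2 *\<^sub>v v2)) = v1 \<bullet> ((M1\<^sup>T * S * M2) *\<^sub>v v2)"
proof -
  have z: "S *\<^sub>v (M2 *\<^sub>v v2) \<in> carrier_vec a" using S M2 v2 by simp
  have "(M1\<^sup>T * S * M2) *\<^sub>v v2 = M1\<^sup>T *\<^sub>v (S *\<^sub>v (M2 *\<^sub>v v2))"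
    using M1 M2 S v2 by (simp add: assoc_mult_mat_vec[of _ b1 a _ b2])
  then have "v1 \<bullet> ((M1\<^sup>T * S * M2) *\<^sub>v v2) = (M1\<^sup>T *\<^sub>v (S *\<^sub>v (M2 *\<^sub>v v2))) \<bullet> v1"
  proof -
    have w: "M1\<^sup>T *\<^sub>v (S *\<^sub>v (M2 *\<^sub>v v2)) \<in> carrier_vec b1" using carrier_matD(2)[OF M1] by (intro carrier_vecI) simp
    show ?thesis using \<open>(M1\<^sup>T * S * M2) *\<^sub>v v2 = _\<close> comm_scalar_prod[OF v1 w] by simp
  qed
  also have "\<dots> = (S *\<^sub>v (M2 *\<^sub>v v2)) \<bullet> (M1 *\<^sub>v v1)" by (rule transpose_vec_mult_scalar[OF M1 v1 z])
  also have "\<dots> = (M1 *\<^sub>v v1) \<bullet> (S *\<^sub>v (M2 *\<^sub>v v2))" using M1 v1 z by (simp add: comm_scalar_prod[of _ a])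
  finally show ?thesis by simp
qed

lemma sym_swap:
  fixes S :: "real mat"
  assumes S: "S \<in> carrier_mat a a" and ST: "S\<^sup>T = S" and x: "x \<in> carrier_vec a" and y: "y \<in> carrier_vec a"
  shows "y \<bullet> (S *\<^sub>v x) = x \<bullet> (S *\<^sub>v y)"
proof -
  have "y \<bullet> (S *\<^sub>v x) = (S\<^sup>T *\<^sub>v y) \<bullet> x" by (rule transpose_vec_mult_scalar[OF S x y, symmetric])
  also have "\<dots> = x \<bullet> (S *\<^sub>v y)" unfolding ST using S x y by (simp add: comm_scalar_prod[of _ a])
  finally show ?thesis .
qed

lemma diag_idx:
  assumes "i < k" "p \<in> carrier_vec k"
  shows "(mat k k (\<lambda>(i,j). if i = j then a i else 0) *\<^sub>v p) $ i = a i * p $ i"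
proof -
  have "(mat k k (\<lambda>(i,j). if i = j then a i else 0) *\<^sub>v p) $ i = (\<Sum>j<k. (if i = j then a i else 0) * p $ j)"
    using assms by (simp add: scalar_prod_def row_def atLeast0LessThan)
  also have "\<dots> = (\<Sum>j<k. if i = j then a i * p $ i else 0)" by (intro sum.cong) auto
  also have "\<dots> = a i * p $ i" using assms(1) by simp
  finally show ?thesis .
qed

lemma diag_quad:
  fixes a :: "nat \<Rightarrow> real"
  assumes "p \<in> carrier_vec k"
  shows "p \<bullet> (mat k k (\<lambda>(i,j). if i = j then a i else 0) *\<^sub>v p) = (\<Sum>i<k. a i * (p $ i)^2)"
proof -
  have "p \<bullet> (mat k k (\<lambda>(i,j). if i = j then a i else 0) *\<^sub>v p) = (\<Sum>i<k. p $ i * (mat k k (\<lambda>(i,j). if i = j then a i else 0) *\<^sub>v p) $ i)"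
    using assms by (simp add: scalar_prod_def atLeast0LessThan)
  also have "\<dots> = (\<Sum>i<k. a i * (p $ i)^2)"
  proof (intro sum.cong refl)
    fix i assume "i \<in> {..<k}"
    then have "(mat k k (\<lambda>(i,j). if i = j then a i else 0) *\<^sub>v p) $ i = a i * p $ i"
      using diag_idx[OF _ assms] by simp
    then show "p $ i * (mat k k (\<lambda>(i,j). if i = j then a i else 0) *\<^sub>v p) $ i = a i * (p $ i)^2"
      by (simp only:) (simp add: power2_eq_square)
  qed
  finally show ?thesis .
qed

lemma diag_minv:
  fixes d :: "nat \<Rightarrow> real"
  assumes d: "\<And>i. i < k \<Longrightarrow> d i \<noteq> 0"
  shows "minv (mat k k (\<lambda>(i,j). if i = j then d i else 0)) = mat k k (\<lambda>(i,j). if i = j then 1 / d i else 0)"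
proof -
  define M where "M = mat k k (\<lambda>(i,j). if i = j then d i else (0::real))"
  define P where "P = mat k k (\<lambda>(i,j). if i = j then 1 / d i else (0::real))"
  have M: "M \<in> carrier_mat k k" and P: "P \<in> carrier_mat k k" by (auto simp: M_def P_def)
  have MP: "M * P = 1\<^sub>m k"
  proof (rule eq_matI)
    fix i j assume ij: "i < dim_row (1\<^sub>m k)" "j < dim_col (1\<^sub>m k)"
    then have "(M * P) $$ (i,j) = (\<Sum>l<k. (if i = l then d i else 0) * (if l = j then 1 / d l else 0))"
      by (simp add: M_def P_def scalar_prod_def row_def col_def atLeast0LessThan)
    also have "\<dots> = (\<Sum>l<k. if l = i then (if i = j then 1 else 0) else 0)"
      using ij d by (intro sum.cong) auto
    also have "\<dots> = (if i = j then 1 else 0)" using ij by simp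
    finally show "(M * P) $$ (i,j) = 1\<^sub>m k $$ (i,j)" using ij by simp
  qed (auto simp: M_def P_def)
  have "det M * det P = 1" using det_mult[OF M P] MP by simp
  then have dM: "det M \<noteq> 0" by auto
  have "minv M = minv M * (M * P)" using minv_inv[OF M dM] by (simp add: MP)
  also have "\<dots> = (minv M * M) * P" by (rule assoc_mult_mat[symmetric, OF minv_inv(3)[OF M dM] M P])
  also have "\<dots> = P" using minv_inv[OF M dM] P by simp
  finally show ?thesis by (simp add: M_def P_def)
qed

lemma sum_split_add: "sum f {..<(a::nat)+b} = sum f {..<a} + (\<Sum>i<b. f (a+i))"
  by (induction b) (auto simp: add.assoc)

lemma Bw_split:
  fixes B :: "real mat"
  assumes B: "B \<in> carrier_mat r (np+n)" and i: "i < r" and u: "u \<in> carrier_vec np" and e: "e \<in> carrier_vec n"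
  shows "(B *\<^sub>v (u @\<^sub>v e)) $ i = (\<Sum>j<np. B $$ (i,j) * u $ j) + (\<Sum>j<n. B $$ (i,np+j) * e $ j)"
proof -
  have "(B *\<^sub>v (u @\<^sub>v e)) $ i = (\<Sum>j<np+n. B $$ (i,j) * (u @\<^sub>v e) $ j)"
    using B i u e by (simp add: scalar_prod_def row_def atLeast0LessThan)
  also have "\<dots> = (\<Sum>j<np. B $$ (i,j) * u $ j) + (\<Sum>j<n. B $$ (i,np+j) * e $ j)"
    unfolding sum_split_add using u e by simp
  finally show ?thesis .
qed

lemma minv_minv:
  fixes A :: "real mat"
  assumes A: "A \<in> carrier_mat n n" and d: "det A \<noteq> 0"
  shows "minv (minv A) = A" "det (minv A) = 1 / det A"
proof -
  note I = minv_inv[OF A d]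
  have "det A * det (minv A) = 1" using det_mult[OF A I(3)] I(1) by simp
  then show dI: "det (minv A) = 1 / det A" using d by (simp add: field_simps)
  then have dI0: "det (minv A) \<noteq> 0" using d by simp
  note J = minv_inv[OF I(3) dI0]
  have "minv (minv A) = minv (minv A) * (minv A * A)" using J(3) I(2) by simp
  also have "\<dots> = (minv (minv A) * minv A) * A" by (rule assoc_mult_mat[symmetric, OF J(3) I(3) A])
  also have "\<dots> = A" using J(2) A by simp
  finally show "minv (minv A) = A" .
qed


theorem proposition4:
  fixes np n q :: nat
    and Z :: "real mat"      \<comment> \<open>joint incidence matrix (rows: first the np prediction
                                  locations, then the n observed ones)\<close>
    and Sigma :: "real mat"  \<comment> \<open>covariance of b\<close>
    and s2 :: real           \<comment> \<open>sigma^2\<close>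
    and Nb :: "nat \<Rightarrow> nat set" \<comment> \<open>neighbour sets in the joint ordering (y_p first)\<close>
    and Fp Fo :: "real vec"  \<comment> \<open>F(X_p) and F(X)\<close>
    and yp y :: "real vec"
    and K B D Bp Bop Bo Dp Do Xi :: "real mat" and mu :: "real vec"
  assumes K_def: "K = Z * Sigma * Z\<^sup>T"
      and B_def: "B = vecchia_B (np + n) K s2 Nb"
      and "D = vecchia_Dmat (np + n) K s2 Nb"
      and "Bp = mat np np (\<lambda>(i,j). B $$ (i, j))"
      and "Bop = mat n np (\<lambda>(i,j). B $$ (np + i, j))"
      and "Bo = mat n n (\<lambda>(i,j). B $$ (np + i, np + j))"
      and "Dp = mat np np (\<lambda>(i,j). D $$ (i, j))"
      and "Do = mat n n (\<lambda>(i,j). D $$ (np + i, np + j))"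
      and "Xi = minv (Bp\<^sup>T * minv Dp * Bp + Bop\<^sup>T * minv Do * Bop)"
      and "mu = Fp - Xi * Bop\<^sup>T * minv Do * Bo *\<^sub>v (y - Fo)"
      and "Z \<in> carrier_mat (np + n) q"
      and "sym_psd q Sigma"
      and "s2 > 0"
      and "\<And>i. i < np + n \<Longrightarrow> Nb i \<subseteq> {..<i}"
      and "Fp \<in> carrier_vec np" and "Fo \<in> carrier_vec n"
      and "yp \<in> carrier_vec np" and "y \<in> carrier_vec n"
  shows "cond_density_first np (vecchia_density (np + n) K s2 Nb (Fp @\<^sub>v Fo)) yp y
           = mvn_density np mu Xi yp"
proof -
  note D_def = assms(3) and Bp_def = assms(4) and Bop_def = assms(5) and Bo_def = assms(6)
    and Dp_def = assms(7) and Do_def = assms(8) and Xi_def = assms(9) and mu_def = assms(10)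
    and Z = assms(11) and s2 = assms(13) and Nb = assms(14)
    and Fp = assms(15) and Fo = assms(16) and yp = assms(17) and y = assms(18)
  have Sig: "Sigma \<in> carrier_mat q q" "Sigma\<^sup>T = Sigma" "\<And>v. v \<in> carrier_vec q \<Longrightarrow> v \<bullet> (Sigma *\<^sub>v v) \<ge> 0"
    using assms(12) unfolding sym_psd_def by auto
  have ZT: "Z\<^sup>T \<in> carrier_mat q (np+n)" using Z by simp
  have Kc: "K \<in> carrier_mat (np+n) (np+n)" unfolding K_def using Z Sig(1) by simp
  have KT: "K\<^sup>T = K"
  proof -
    have "K\<^sup>T = (Z\<^sup>T)\<^sup>T * (Z * Sigma)\<^sup>T" unfolding K_def
      by (rule transpose_mult[of _ "np+n" q]) (use Z Sig(1) in auto)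
    also have "(Z * Sigma)\<^sup>T = Sigma\<^sup>T * Z\<^sup>T" by (rule transpose_mult[OF Z Sig(1)])
    also have "(Z\<^sup>T)\<^sup>T * (Sigma\<^sup>T * Z\<^sup>T) = Z * Sigma * Z\<^sup>T"
      unfolding Sig(2) transpose_transpose by (rule assoc_mult_mat[symmetric, OF Z Sig(1) ZT])
    finally show ?thesis unfolding K_def .
  qed
  have Kpsd: "qf (np+n) (\<lambda>p q. K $$ (p,q)) x \<ge> 0" for x
  proof -
    define v where "v = vec (np+n) x"
    have v: "v \<in> carrier_vec (np+n)" by (simp add: v_def)
    have "qf (np+n) (\<lambda>p q. K $$ (p,q)) x = qf (np+n) (\<lambda>p q. K $$ (p,q)) (\<lambda>i. v $ i)"
      by (rule qf_cong) (simp add: v_def)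
    also have "\<dots> = v \<bullet> (K *\<^sub>v v)" by (rule jnf_qf[OF Kc v, symmetric])
    also have "\<dots> = (Z\<^sup>T *\<^sub>v v) \<bullet> (Sigma *\<^sub>v (Z\<^sup>T *\<^sub>v v))"
      unfolding K_def using bil[OF ZT ZT Sig(1) v v] by simp
    also have "\<dots> \<ge> 0" by (rule Sig(3)) (use ZT v in simp)
    finally show ?thesis .
  qed
  define Dv where "Dv = (\<lambda>i. vecchia_D (np+n) K s2 Nb i)"
  have Dpos: "Dv i > 0" if "i < np + n" for i
    unfolding Dv_def by (rule vecchia_D_pos) (use Kc KT Kpsd s2 Nb that in auto)
  have Dnz: "Dv i \<noteq> 0" if "i < np + n" for i using Dpos[OF that] by simp
  have Didx: "D $$ (i,j) = (if i = j then Dv i else 0)" if "i < np+n" "j < np+n" for i j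
    using that by (simp add: D_def vecchia_Dmat_def Dv_def)
  have Dp_eq: "Dp = mat np np (\<lambda>(i,j). if i = j then Dv i else 0)"
    unfolding Dp_def by (rule eq_matI) (auto simp: Didx)
  have Do_eq: "Do = mat n n (\<lambda>(i,j). if i = j then Dv (np+i) else 0)"
    unfolding Do_def by (rule eq_matI) (auto simp: Didx)
  define Dpi where "Dpi = mat np np (\<lambda>(i,j). if i = j then 1 / Dv i else 0)"
  define Doi where "Doi = mat n n (\<lambda>(i,j). if i = j then 1 / Dv (np+i) else 0)"
  have Dpi_eq: "minv Dp = Dpi" unfolding Dp_eq Dpi_def by (rule diag_minv) (use Dnz in auto)
  have Doi_eq: "minv Do = Doi" unfolding Do_eq Doi_def by (rule diag_minv) (use Dnz in auto)
  have Dpi: "Dpi \<in> carrier_mat np np" "Dpi\<^sup>T = Dpi" unfolding Dpi_def by (auto intro!: eq_matI)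
  have Doi: "Doi \<in> carrier_mat n n" "Doi\<^sup>T = Doi" unfolding Doi_def by (auto intro!: eq_matI)
  have Bc: "B \<in> carrier_mat (np+n) (np+n)" by (simp add: B_def vecchia_B_def)
  have Bp: "Bp \<in> carrier_mat np np" and Bop: "Bop \<in> carrier_mat n np" and Bo: "Bo \<in> carrier_mat n n"
    by (auto simp: Bp_def Bop_def Bo_def)
  have Bup: "B $$ (i, np + j) = 0" if "i < np" "j < n" for i j
  proof -
    have "np + j \<notin> Nb i" using Nb[of i] that by auto
    then show ?thesis using that by (simp add: B_def vecchia_B_def)
  qed
  have Blow: "Bp $$ (i,j) = 0" if "i < j" "j < np" for i j
  proof -
    have "j \<notin> Nb i" using Nb[of i] that by auto
    then show ?thesis using that by (simp add: Bp_def B_def vecchia_B_def)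
  qed
  have dBp: "det Bp = 1"
  proof -
    have "det Bp = prod_list (diag_mat Bp)" by (rule det_lower_triangular[OF _ Bp]) (rule Blow)
    also have "\<dots> = 1" unfolding prod_list_diag_prod by (simp add: Bp_def B_def vecchia_B_def)
    finally show ?thesis .
  qed
  define Q where "Q = Bp\<^sup>T * Dpi * Bp + Bop\<^sup>T * Doi * Bop"
  define G where "G = Bop\<^sup>T * Doi * Bo"
  define H where "H = Bo\<^sup>T * Doi * Bo"
  have Qc: "Q \<in> carrier_mat np np" unfolding Q_def using Bp Bop Dpi Doi by simp
  have Gc: "G \<in> carrier_mat np n" unfolding G_def using Bop Bo Doi by simp
  have Hc: "H \<in> carrier_mat n n" unfolding H_def using Bo Doi by simp
  have symq: "(M\<^sup>T * S * M)\<^sup>T = M\<^sup>T * S * M" if "M \<in> carrier_mat a b" "S \<in> carrier_mat a a" "S\<^sup>T = S"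
    for M S :: "real mat" and a b
  proof -
    have "(M\<^sup>T * S * M)\<^sup>T = M\<^sup>T * (M\<^sup>T * S)\<^sup>T"
      by (rule transpose_mult[of _ b a _ b]) (use that in auto)
    also have "(M\<^sup>T * S)\<^sup>T = S\<^sup>T * M" using transpose_mult[of "M\<^sup>T" b a S a] that by simp
    also have "M\<^sup>T * (S\<^sup>T * M) = M\<^sup>T * S * M" unfolding that(3)
      by (rule assoc_mult_mat[symmetric]) (use that in auto)
    finally show ?thesis .
  qed
  have QT: "Q\<^sup>T = Q" unfolding Q_def
    using transpose_add[of "Bp\<^sup>T * Dpi * Bp" np np "Bop\<^sup>T * Doi * Bop"] symq[OF Bp Dpi] symq[OF Bop Doi] Bp Bop Dpi Doi
    by simp
  have rho: "(\<Sum>i<np+n. ((B *\<^sub>v (u @\<^sub>v e)) $ i)^2 / Dv i) = u \<bullet> (Q *\<^sub>v u) + 2 * (u \<bullet> (G *\<^sub>v e)) + e \<bullet> (H *\<^sub>v e)"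
    and rho1: "\<And>i. i < np \<Longrightarrow> (B *\<^sub>v (u @\<^sub>v e)) $ i = (Bp *\<^sub>v u) $ i"
    if u: "u \<in> carrier_vec np" and e: "e \<in> carrier_vec n" for u e
  proof -
    show r1: "(B *\<^sub>v (u @\<^sub>v e)) $ i = (Bp *\<^sub>v u) $ i" if i: "i < np" for i
    proof -
      have "(B *\<^sub>v (u @\<^sub>v e)) $ i = (\<Sum>j<np. B $$ (i,j) * u $ j) + (\<Sum>j<n. B $$ (i,np+j) * e $ j)"
        by (rule Bw_split[OF Bc _ u e]) (use i in simp)
      also have "(\<Sum>j<n. B $$ (i,np+j) * e $ j) = 0" using Bup[OF i] by simp
      also have "(\<Sum>j<np. B $$ (i,j) * u $ j) = (Bp *\<^sub>v u) $ i"
        using i u by (simp add: Bp_def scalar_prod_def row_def atLeast0LessThan)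
      finally show ?thesis by simp
    qed
    have r2: "(B *\<^sub>v (u @\<^sub>v e)) $ (np+i) = (Bop *\<^sub>v u + Bo *\<^sub>v e) $ i" if i: "i < n" for i
    proof -
      have "(B *\<^sub>v (u @\<^sub>v e)) $ (np+i) = (\<Sum>j<np. B $$ (np+i,j) * u $ j) + (\<Sum>j<n. B $$ (np+i,np+j) * e $ j)"
        by (rule Bw_split[OF Bc _ u e]) (use i in simp)
      also have "(\<Sum>j<np. B $$ (np+i,j) * u $ j) = (Bop *\<^sub>v u) $ i"
        using i u by (simp add: Bop_def scalar_prod_def row_def atLeast0LessThan)
      also have "(\<Sum>j<n. B $$ (np+i,np+j) * e $ j) = (Bo *\<^sub>v e) $ i"
        using i e by (simp add: Bo_def scalar_prod_def row_def atLeast0LessThan)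
      finally show ?thesis using i Bop Bo by simp
    qed
    define a where "a = Bop *\<^sub>v u"
    define b where "b = Bo *\<^sub>v e"
    have a: "a \<in> carrier_vec n" and b: "b \<in> carrier_vec n" using Bop Bo u e by (auto simp: a_def b_def)
    have pu: "Bp *\<^sub>v u \<in> carrier_vec np" using Bp u by simp
    have "(\<Sum>i<np+n. ((B *\<^sub>v (u @\<^sub>v e)) $ i)^2 / Dv i)
        = (\<Sum>i<np. 1 / Dv i * ((Bp *\<^sub>v u) $ i)^2) + (\<Sum>i<n. 1 / Dv (np+i) * ((a + b) $ i)^2)"
      unfolding sum_split_add by (simp add: r1 r2 a_def b_def)
    also have "(\<Sum>i<np. 1 / Dv i * ((Bp *\<^sub>v u) $ i)^2) = (Bp *\<^sub>v u) \<bullet> (Dpi *\<^sub>v (Bp *\<^sub>v u))"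
      unfolding Dpi_def by (rule diag_quad[OF pu, symmetric])
    also have "(\<Sum>i<n. 1 / Dv (np+i) * ((a + b) $ i)^2) = (a + b) \<bullet> (Doi *\<^sub>v (a + b))"
      unfolding Doi_def by (rule diag_quad[symmetric]) (use a b in simp)
    also have "(a + b) \<bullet> (Doi *\<^sub>v (a + b)) = a \<bullet> (Doi *\<^sub>v a) + a \<bullet> (Doi *\<^sub>v b) + b \<bullet> (Doi *\<^sub>v a) + b \<bullet> (Doi *\<^sub>v b)"
      using a b Doi(1)
      by (simp add: mult_add_distrib_mat_vec[OF Doi(1) a b] add_scalar_prod_distrib[of _ n] scalar_prod_add_distrib[of _ n])
    also have "b \<bullet> (Doi *\<^sub>v a) = a \<bullet> (Doi *\<^sub>v b)" by (rule sym_swap[OF Doi(1) Doi(2) a b])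
    also have "(Bp *\<^sub>v u) \<bullet> (Dpi *\<^sub>v (Bp *\<^sub>v u)) = u \<bullet> ((Bp\<^sup>T * Dpi * Bp) *\<^sub>v u)" by (rule bil[OF Bp Bp Dpi(1) u u])
    also have "a \<bullet> (Doi *\<^sub>v a) = u \<bullet> ((Bop\<^sup>T * Doi * Bop) *\<^sub>v u)" unfolding a_def by (rule bil[OF Bop Bop Doi(1) u u])
    also have "a \<bullet> (Doi *\<^sub>v b) = u \<bullet> (G *\<^sub>v e)" unfolding a_def b_def G_def by (rule bil[OF Bop Bo Doi(1) u e])
    also have "b \<bullet> (Doi *\<^sub>v b) = e \<bullet> (H *\<^sub>v e)" unfolding b_def H_def by (rule bil[OF Bo Bo Doi(1) e e])
    moreover have "u \<bullet> ((Bp\<^sup>T * Dpi * Bp) *\<^sub>v u) + u \<bullet> ((Bop\<^sup>T * Doi * Bop) *\<^sub>v u) = u \<bullet> (Q *\<^sub>v u)"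
    proof -
      have c1: "Bp\<^sup>T * Dpi * Bp \<in> carrier_mat np np" "Bop\<^sup>T * Doi * Bop \<in> carrier_mat np np"
        using Bp Bop Dpi(1) Doi(1) by auto
      have "Q *\<^sub>v u = (Bp\<^sup>T * Dpi * Bp) *\<^sub>v u + (Bop\<^sup>T * Doi * Bop) *\<^sub>v u"
        unfolding Q_def by (rule add_mult_distrib_mat_vec[OF c1 u])
      moreover have "u \<bullet> ((Bp\<^sup>T * Dpi * Bp) *\<^sub>v u + (Bop\<^sup>T * Doi * Bop) *\<^sub>v u)
          = u \<bullet> ((Bp\<^sup>T * Dpi * Bp) *\<^sub>v u) + u \<bullet> ((Bop\<^sup>T * Doi * Bop) *\<^sub>v u)"
        by (rule scalar_prod_add_distrib[of _ np]) (use c1 u in auto)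
      ultimately show ?thesis by simp
    qed
    ultimately show "(\<Sum>i<np+n. ((B *\<^sub>v (u @\<^sub>v e)) $ i)^2 / Dv i) = u \<bullet> (Q *\<^sub>v u) + 2 * (u \<bullet> (G *\<^sub>v e)) + e \<bullet> (H *\<^sub>v e)"
      by linarith
  qed
  have Qpd: "v \<bullet> (Q *\<^sub>v v) > 0" if v: "v \<in> carrier_vec np" "v \<noteq> 0\<^sub>v np" for v
  proof -
    have "Bp *\<^sub>v v \<noteq> 0\<^sub>v np"
    proof
      assume "Bp *\<^sub>v v = 0\<^sub>v np"
      then have "det Bp = 0" using det_0_iff_vec_prod_zero[OF Bp] v by blast
      then show False using dBp by simp
    qed
    then obtain i0 where i0: "i0 < np" "(Bp *\<^sub>v v) $ i0 \<noteq> 0"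
      using Bp by (metis eq_vecI carrier_matD(1) dim_mult_mat_vec index_zero_vec)
    have z: "0\<^sub>v n \<in> carrier_vec n" by simp
    have "(\<Sum>i<np+n. ((B *\<^sub>v (v @\<^sub>v 0\<^sub>v n)) $ i)^2 / Dv i) = v \<bullet> (Q *\<^sub>v v) + 2 * (v \<bullet> (G *\<^sub>v 0\<^sub>v n)) + 0\<^sub>v n \<bullet> (H *\<^sub>v 0\<^sub>v n)"
      by (rule rho[OF v(1) z])
    also have "G *\<^sub>v 0\<^sub>v n = 0\<^sub>v np" using Gc by auto
    also have "H *\<^sub>v 0\<^sub>v n = 0\<^sub>v n" using Hc by auto
    finally have eq: "(\<Sum>i<np+n. ((B *\<^sub>v (v @\<^sub>v 0\<^sub>v n)) $ i)^2 / Dv i) = v \<bullet> (Q *\<^sub>v v)" using v by simp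
    have "((B *\<^sub>v (v @\<^sub>v 0\<^sub>v n)) $ i0)^2 / Dv i0 \<le> (\<Sum>i<np+n. ((B *\<^sub>v (v @\<^sub>v 0\<^sub>v n)) $ i)^2 / Dv i)"
      by (rule member_le_sum) (use i0 Dpos in \<open>auto intro!: divide_nonneg_pos\<close>)
    moreover have "((B *\<^sub>v (v @\<^sub>v 0\<^sub>v n)) $ i0)^2 / Dv i0 > 0"
      using rho1[OF v(1) z i0(1)] i0 Dpos[of i0] by simp
    ultimately show ?thesis using eq by simp
  qed
  define e0 where "e0 = y - Fo"
  have e0: "e0 \<in> carrier_vec n" using y Fo by (simp add: e0_def)
  have Xi_eq: "Xi = minv Q" unfolding Xi_def Q_def Dpi_eq Doi_eq ..
  have dQ: "det Q > 0" using gauss_jnf(2)[OF Qc QT Qpd] Fp by blast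
  have Xic: "Xi \<in> carrier_mat np np" and QXi: "Q * Xi = 1\<^sub>m np"
    using minv_inv[OF Qc] dQ by (auto simp: Xi_eq)
  have mXi: "minv Xi = Q" and dXi: "det Xi = 1 / det Q" using minv_minv[OF Qc] dQ by (auto simp: Xi_eq)
  define g where "g = G *\<^sub>v e0"
  define h where "h = Xi *\<^sub>v g"
  have g: "g \<in> carrier_vec np" using Gc e0 by (simp add: g_def)
  have h: "h \<in> carrier_vec np" using Xic g by (simp add: h_def)
  have mu_eq: "mu = Fp - h"
  proof -
    have c1: "Xi * Bop\<^sup>T * Doi \<in> carrier_mat np n" "Xi * Bop\<^sup>T \<in> carrier_mat np n" "Bop\<^sup>T * Doi \<in> carrier_mat np n"
      using Xic Bop Doi(1) by auto
    have "(Xi * Bop\<^sup>T * Doi * Bo) *\<^sub>v e0 = (Xi * Bop\<^sup>T * Doi) *\<^sub>v (Bo *\<^sub>v e0)"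
      by (rule assoc_mult_mat_vec[OF c1(1) Bo e0])
    also have "\<dots> = (Xi * Bop\<^sup>T) *\<^sub>v (Doi *\<^sub>v (Bo *\<^sub>v e0))"
      by (rule assoc_mult_mat_vec[OF c1(2) Doi(1)]) (use Bo e0 in simp)
    also have "\<dots> = Xi *\<^sub>v (Bop\<^sup>T *\<^sub>v (Doi *\<^sub>v (Bo *\<^sub>v e0)))"
      by (rule assoc_mult_mat_vec[OF Xic]) (use Bop Doi(1) Bo e0 in auto)
    also have "Bop\<^sup>T *\<^sub>v (Doi *\<^sub>v (Bo *\<^sub>v e0)) = g"
    proof -
      have "g = (Bop\<^sup>T * Doi) *\<^sub>v (Bo *\<^sub>v e0)" unfolding g_def G_def by (rule assoc_mult_mat_vec[OF c1(3) Bo e0])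
      also have "\<dots> = Bop\<^sup>T *\<^sub>v (Doi *\<^sub>v (Bo *\<^sub>v e0))" by (rule assoc_mult_mat_vec) (use Bop Doi(1) Bo e0 in auto)
      finally show ?thesis by simp
    qed
    finally have "(Xi * Bop\<^sup>T * Doi * Bo) *\<^sub>v e0 = h" unfolding h_def .
    then show ?thesis unfolding mu_def Doi_eq e0_def[symmetric] by simp
  qed
  have mu: "mu \<in> carrier_vec np" using Fp h by (simp add: mu_eq)
  define c where "c = e0 \<bullet> (H *\<^sub>v e0) - h \<bullet> (Q *\<^sub>v h)"
  have compl: "(\<Sum>i<np+n. ((B *\<^sub>v ((x - Fp) @\<^sub>v e0)) $ i)^2 / Dv i) = (x - mu) \<bullet> (Q *\<^sub>v (x - mu)) + c"
    if x: "x \<in> carrier_vec np" for x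
  proof -
    define u where "u = x - Fp"
    have u: "u \<in> carrier_vec np" using x Fp by (simp add: u_def)
    have xm: "x - mu = u + h" unfolding mu_eq u_def by (rule eq_vecI) (use x Fp h in auto)
    have Qh: "Q *\<^sub>v h = g"
    proof -
      have "Q *\<^sub>v h = (Q * Xi) *\<^sub>v g" unfolding h_def by (rule assoc_mult_mat_vec[symmetric, OF Qc Xic g])
      then show ?thesis using QXi g by simp
    qed
    have Qu: "Q *\<^sub>v u \<in> carrier_vec np" using Qc u by simp
    have "(u + h) \<bullet> (Q *\<^sub>v (u + h)) = u \<bullet> (Q *\<^sub>v u) + u \<bullet> (Q *\<^sub>v h) + (h \<bullet> (Q *\<^sub>v u) + h \<bullet> (Q *\<^sub>v h))"
    proof -
      have "Q *\<^sub>v (u + h) = Q *\<^sub>v u + Q *\<^sub>v h" by (rule mult_add_distrib_mat_vec[OF Qc u h])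
      moreover have "(u + h) \<bullet> (Q *\<^sub>v u + Q *\<^sub>v h) = u \<bullet> (Q *\<^sub>v u + Q *\<^sub>v h) + h \<bullet> (Q *\<^sub>v u + Q *\<^sub>v h)"
        by (rule add_scalar_prod_distrib[of _ np]) (use u h Qu Qc in auto)
      moreover have "u \<bullet> (Q *\<^sub>v u + Q *\<^sub>v h) = u \<bullet> (Q *\<^sub>v u) + u \<bullet> (Q *\<^sub>v h)"
        by (rule scalar_prod_add_distrib[of _ np]) (use u h Qu Qc in auto)
      moreover have "h \<bullet> (Q *\<^sub>v u + Q *\<^sub>v h) = h \<bullet> (Q *\<^sub>v u) + h \<bullet> (Q *\<^sub>v h)"
        by (rule scalar_prod_add_distrib[of _ np]) (use u h Qu Qc in auto)
      ultimately show ?thesis by simp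
    qed
    also have "h \<bullet> (Q *\<^sub>v u) = u \<bullet> (Q *\<^sub>v h)" by (rule sym_swap[OF Qc QT u h])
    finally have e1: "(u + h) \<bullet> (Q *\<^sub>v (u + h)) = u \<bullet> (Q *\<^sub>v u) + 2 * (u \<bullet> g) + h \<bullet> (Q *\<^sub>v h)"
      unfolding Qh by simp
    have "(\<Sum>i<np+n. ((B *\<^sub>v (u @\<^sub>v e0)) $ i)^2 / Dv i) = u \<bullet> (Q *\<^sub>v u) + 2 * (u \<bullet> g) + e0 \<bullet> (H *\<^sub>v e0)"
      unfolding g_def by (rule rho[OF u e0])
    then show ?thesis unfolding xm e1 c_def u_def[symmetric] by simp
  qed
  define P where "P = (\<Prod>i<np+n. 1 / sqrt (2 * pi * Dv i))"
  define PE where "PE = P * exp (- c / 2)"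
  have Ppos: "P > 0" unfolding P_def using Dpos by (auto intro!: prod_pos)
  then have PE0: "PE \<noteq> 0" by (simp add: PE_def)
  have F: "Fp @\<^sub>v Fo \<in> carrier_vec (np+n)" using Fp Fo by simp
  have fx: "vecchia_density (np + n) K s2 Nb (Fp @\<^sub>v Fo) (x @\<^sub>v y)
      = PE * exp (- (1/2) * ((x - mu) \<bullet> (Q *\<^sub>v (x - mu))))" if x: "x \<in> carrier_vec np" for x
  proof -
    have xy: "x @\<^sub>v y \<in> carrier_vec (np+n)" using x y by simp
    have diff: "(x @\<^sub>v y) - (Fp @\<^sub>v Fo) = (x - Fp) @\<^sub>v e0"
      by (rule eq_vecI) (use x y Fp Fo in \<open>auto simp: e0_def\<close>)
    have "vecchia_density (np + n) K s2 Nb (Fp @\<^sub>v Fo) (x @\<^sub>v y)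
        = P * exp (- (\<Sum>i<np+n. ((B *\<^sub>v ((x - Fp) @\<^sub>v e0)) $ i)^2 / Dv i) / 2)"
      unfolding P_def Dv_def B_def diff[symmetric]
      by (rule vecchia_density_eq[OF Nb _ xy F]) (use Dpos in \<open>auto simp: Dv_def\<close>)
    also have "\<dots> = P * exp (- ((x - mu) \<bullet> (Q *\<^sub>v (x - mu)) + c) / 2)" unfolding compl[OF x] ..
    also have "\<dots> = PE * exp (- (1/2) * ((x - mu) \<bullet> (Q *\<^sub>v (x - mu))))"
      unfolding PE_def by (simp add: exp_add[symmetric] field_simps)
    finally show ?thesis .
  qed
  have den: "(\<integral>z. vecchia_density (np + n) K s2 Nb (Fp @\<^sub>v Fo) (vec np z @\<^sub>v y) \<partial>(PiM {..<np} (\<lambda>_. lborel)))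
      = PE * sqrt ((2*pi)^np / det Q)"
  proof -
    have "(\<integral>z. vecchia_density (np + n) K s2 Nb (Fp @\<^sub>v Fo) (vec np z @\<^sub>v y) \<partial>(PiM {..<np} (\<lambda>_. lborel)))
        = (\<integral>z. PE * exp (- (1/2) * ((vec np z - mu) \<bullet> (Q *\<^sub>v (vec np z - mu)))) \<partial>(PiM {..<np} (\<lambda>_. lborel)))"
      by (simp only: fx[OF vec_carrier])
    also have "\<dots> = PE * (\<integral>z. exp (- (1/2) * ((vec np z - mu) \<bullet> (Q *\<^sub>v (vec np z - mu)))) \<partial>(PiM {..<np} (\<lambda>_. lborel)))"
      by (rule integral_mult_right_zero)
    also have "(\<integral>z. exp (- (1/2) * ((vec np z - mu) \<bullet> (Q *\<^sub>v (vec np z - mu)))) \<partial>(PiM {..<np} (\<lambda>_. lborel)))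
        = sqrt ((2*pi)^np / det Q)"
      by (rule gauss_jnf(1)[OF Qc QT Qpd mu])
    finally show ?thesis .
  qed
  have "cond_density_first np (vecchia_density (np + n) K s2 Nb (Fp @\<^sub>v Fo)) yp y
      = PE * exp (- (1/2) * ((yp - mu) \<bullet> (Q *\<^sub>v (yp - mu)))) / (PE * sqrt ((2*pi)^np / det Q))"
    unfolding cond_density_first_def den fx[OF yp] ..
  also have "\<dots> = exp (- (1/2) * ((yp - mu) \<bullet> (Q *\<^sub>v (yp - mu)))) / sqrt ((2*pi)^np / det Q)"
    using PE0 by simp
  also have "\<dots> = mvn_density np mu Xi yp"
    unfolding mvn_density_def mXi dXi by simp
  finally show ?thesis .
qed


end
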